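(* Let $\phi$ be a Drinfeld $A[\underline{t}_s]$-module over $\mathbb{T}_s$ with $\phi_\theta=\theta+A_1\tau+\dots+A_r\tau^r$, $A_r\in\mathbb{T}_s^\times$. Equip $H(\phi)=\mathbb{T}_s[\sigma]$ with the $\mathbb{T}_s[z]$-module structure $cz^k\cdot h=c\,h\,(\phi_\theta^* )^k$ for $c\in\mathbb{T}_s$, $h\in\mathbb{T}_s[\sigma]$, $k\ge0$, where $\phi_\theta^*=\theta+A_1^{(-1)}\sigma+\dots+A_r^{(-r)}\sigma^r$. Then $H(\phi)$ is a free finitely generated $\mathbb{T}_s[z]$-module with basis $1,\sigma,\dots,\sigma^{r-1}$.
   Context: $\mathbb{F}_q$ finite field, $\theta,t_1,\dots,t_s,z$ independent variables, $A[\underline{t}_s]=\mathbb{F}_q[\theta,t_1,\dots,t_s]$, $\mathbb{F}_q[\underline{t}_s]=\mathbb{F}_q[t_1,\dots,t_s]$. $\mathbb{C}_\infty$: completion of an algebraic closure of $\mathbb{F}_q((1/\theta))$. $\mathbb{T}_s$: Tate algebra of power series in $t_1,\dots,t_s$ over $\mathbb{C}_\infty$ with coefficients tending to $0$. $\tau$ raises coefficients to the $q$-th power, $f^{(n)}=\tau^n(f)$ for $n\in\mathbb{Z}$, $\sigma=\tau^{-1}$. $\mathbb{T}_s[\tau]$ (resp. $\mathbb{T}_s[\sigma]$) is the twisted polynomial ring with $\tau f=f^{(1)}\tau$ (resp. $\sigma f=f^{(-1)}\sigma$). A Drinfeld $A[\underline{t}_s]$-module is an $\mathbb{F}_q[\underline{t}_s]$-algebra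 homomorphism $\phi:A[\underline{t}_s]\to\mathbb{T}_s[\tau]$ with $\phi_\theta=\theta+A_1\tau+\dots+A_r\tau^r$. *)

theory Defs
  imports "HOL-Computational_Algebra.Polynomial"
begin

text \<open>Abstract setting: a commutative ring (standing for the Tate algebra T_s) with a
ring automorphism tau (standing for the Frobenius twist); sigma = inv tau.
Twisted polynomials sum_i a_i sigma^i are represented by their coefficient
functions nat => 'a with finite support.\<close>

definition ring_automorphism :: "('a::comm_ring_1 \<Rightarrow> 'a) \<Rightarrow> bool" where
  "ring_automorphism f \<longleftrightarrow> bij f \<and> f 1 = 1 \<and>
     (\<forall>x y. f (x + y) = f x + f y) \<and> (\<forall>x y. f (x * y) = f x * f y)"

definition twisted_poly :: "(nat \<Rightarrow> 'a::zero) \<Rightarrow> bool" where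
  "twisted_poly f \<longleftrightarrow> finite {i. f i \<noteq> 0}"

text \<open>Product in the twisted polynomial ring with sigma * c = s(c) * sigma.\<close>
definition tmult :: "('a::comm_ring_1 \<Rightarrow> 'a) \<Rightarrow> (nat \<Rightarrow> 'a) \<Rightarrow> (nat \<Rightarrow> 'a) \<Rightarrow> nat \<Rightarrow> 'a" where
  "tmult s f g = (\<lambda>n. \<Sum>i\<le>n. f i * (s ^^ i) (g (n - i)))"

definition tone :: "nat \<Rightarrow> 'a::comm_ring_1" where
  "tone = (\<lambda>n. if n = 0 then 1 else 0)"

definition tmon :: "nat \<Rightarrow> nat \<Rightarrow> 'a::comm_ring_1" where
  "tmon i = (\<lambda>n. if n = i then 1 else 0)"

definition tpow :: "('a::comm_ring_1 \<Rightarrow> 'a) \<Rightarrow> (nat \<Rightarrow> 'a) \<Rightarrow> nat \<Rightarrow> nat \<Rightarrow> 'a" where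
  "tpow s f k = ((\<lambda>g. tmult s g f) ^^ k) tone"

text \<open>phi*_theta = theta + A_1^(-1) sigma + ... + A_r^(-r) sigma^r, with s = sigma.\<close>
definition dual_phi :: "('a::comm_ring_1 \<Rightarrow> 'a) \<Rightarrow> 'a \<Rightarrow> (nat \<Rightarrow> 'a) \<Rightarrow> nat \<Rightarrow> nat \<Rightarrow> 'a" where
  "dual_phi s theta A r = (\<lambda>n. if n = 0 then theta
                               else if n \<le> r then (s ^^ n) (A n) else 0)"

definition zact :: "('a::comm_ring_1 \<Rightarrow> 'a) \<Rightarrow> (nat \<Rightarrow> 'a) \<Rightarrow> 'a poly \<Rightarrow> (nat \<Rightarrow> 'a) \<Rightarrow> nat \<Rightarrow> 'a" where
  "zact s phis p h = (\<lambda>n. \<Sum>k\<le>degree p. coeff p k * tmult s h (tpow s phis k) n)"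

end

theory Submission
  imports Defs
begin

lemma funpow_zero: "(s::'a::comm_ring_1\<Rightarrow>'a) 0 = 0 \<Longrightarrow> (s^^i) 0 = 0"
  by (induction i) auto

lemma funpow_mult: "\<forall>x y. (s::'a::comm_ring_1\<Rightarrow>'a) (x*y) = s x * s y \<Longrightarrow> (s^^i) (x*y) = (s^^i) x * (s^^i) y"
  by (induction i) auto

lemma funpow_one: "(s::'a::comm_ring_1\<Rightarrow>'a) 1 = 1 \<Longrightarrow> (s^^i) 1 = 1"
  by (induction i) auto

lemma funpow_unit:
  assumes "\<forall>x y. (s::'a::comm_ring_1\<Rightarrow>'a) (x*y) = s x * s y" "s 1 = 1" "x dvd 1"
  shows "(s^^i) x dvd 1"
proof -
  obtain y where "1 = x * y" using assms(3) dvdE by blast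
  then have "(s^^i) 1 = (s^^i) x * (s^^i) y" using funpow_mult[where s=s, OF assms(1)] by metis
  then have "1 = (s^^i) x * (s^^i) y" using funpow_one[where s=s, OF assms(2)] by simp
  then show ?thesis by (rule dvdI)
qed

lemma tmult_high:
  assumes s0: "(s::'a::comm_ring_1\<Rightarrow>'a) 0 = 0" and f: "\<forall>n>a. f n = 0" and g: "\<forall>n>b. g n = 0"
    and n: "n > a + b"
  shows "tmult s f g n = 0"
  unfolding tmult_def
proof (rule sum.neutral, intro ballI)
  fix i assume "i \<in> {..n}"
  show "f i * (s ^^ i) (g (n - i)) = 0"
  proof (cases "i > a")
    case True then show ?thesis using f by simp
  next
    case False then have "n - i > b" using n by simp
    then show ?thesis using g funpow_zero[where s=s, OF s0] by simp
  qed
qed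

lemma tmult_top:
  assumes s0: "(s::'a::comm_ring_1\<Rightarrow>'a) 0 = 0" and f: "\<forall>n>a. f n = 0" and g: "\<forall>n>b. g n = 0"
  shows "tmult s f g (a+b) = f a * (s^^a) (g b)"
proof -
  let ?F = "\<lambda>i. f i * (s ^^ i) (g (a + b - i))"
  have "tmult s f g (a+b) = ?F a + sum ?F ({..a+b} - {a})"
    unfolding tmult_def by (rule sum.remove) auto
  moreover have "sum ?F ({..a+b} - {a}) = 0"
  proof (rule sum.neutral, intro ballI)
    fix i assume i: "i \<in> {..a+b} - {a}"
    show "?F i = 0"
    proof (cases "i > a")
      case True then show ?thesis using f by simp
    next
      case False then have "a + b - i > b" using i by auto
      then show ?thesis using g funpow_zero[where s=s, OF s0] by simp
    qed
  qed
  ultimately show ?thesis by simp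
qed

lemma tpow_Suc: "tpow s f (Suc k) = tmult s (tpow s f k) f"
  unfolding tpow_def by simp

lemma tpow_props:
  assumes s0: "(s::'a::comm_ring_1\<Rightarrow>'a) 0 = 0" and sm: "\<forall>x y. s (x*y) = s x * s y" and s1: "s 1 = 1"
    and f: "\<forall>n>r. f n = 0" and fu: "f r dvd 1"
  shows "(\<forall>n>r*k. tpow s f k n = 0) \<and> tpow s f k (r*k) dvd 1"
proof (induction k)
  case 0
  then show ?case unfolding tpow_def tone_def by simp
next
  case (Suc k)
  then have h: "\<forall>n>r*k. tpow s f k n = 0" and u: "tpow s f k (r*k) dvd 1" by auto
  have "\<forall>n>r*k + r. tpow s f (Suc k) n = 0"
    unfolding tpow_Suc using tmult_high[where s=s, OF s0 h f] by blast
  moreover have "tpow s f (Suc k) (r*k+r) = tpow s f k (r*k) * (s^^(r*k)) (f r)"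
    unfolding tpow_Suc using tmult_top[where s=s, OF s0 h f] by blast
  moreover have "(s^^(r*k)) (f r) dvd 1" using funpow_unit[where s=s, OF sm s1 fu] .
  ultimately show ?case using u mult_dvd_mono[of "tpow s f k (r*k)" 1 "(s^^(r*k)) (f r)" 1] by (simp add: algebra_simps)
qed

lemma tmon_high: "\<forall>n>i. tmon i n = (0::'a::comm_ring_1)"
  unfolding tmon_def by simp

definition Bf :: "('a::comm_ring_1 \<Rightarrow> 'a) \<Rightarrow> (nat \<Rightarrow> 'a) \<Rightarrow> nat \<Rightarrow> nat \<Rightarrow> nat \<Rightarrow> 'a" where
  "Bf s f r m = tmult s (tmon (m mod r)) (tpow s f (m div r))"

lemma Bf_props:
  assumes s0: "(s::'a::comm_ring_1\<Rightarrow>'a) 0 = 0" and sm: "\<forall>x y. s (x*y) = s x * s y" and s1: "s 1 = 1"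
    and f: "\<forall>n>r. f n = 0" and fu: "f r dvd 1"
  shows "(\<forall>n>m. Bf s f r m n = 0) \<and> Bf s f r m m dvd 1"
proof -
  have m: "m = m mod r + r * (m div r)" by simp
  note tp = tpow_props[OF s0 sm s1 f fu, of "m div r"]
  have "\<forall>n>m mod r + r * (m div r). Bf s f r m n = 0"
    unfolding Bf_def using tmult_high[where s=s and a="m mod r", OF s0 tmon_high] tp by blast
  moreover have "Bf s f r m (m mod r + r * (m div r)) = tmon (m mod r) (m mod r) * (s^^(m mod r)) (tpow s f (m div r) (r * (m div r)))"
    unfolding Bf_def using tmult_top[where s=s and a="m mod r", OF s0 tmon_high] tp by blast
  moreover have "(s^^(m mod r)) (tpow s f (m div r) (r * (m div r))) dvd 1"
    using funpow_unit[where s=s, OF sm s1] tp by blast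
  ultimately show ?thesis using m by (simp add: tmon_def)
qed

lemma tri_unique:
  fixes B :: "nat \<Rightarrow> nat \<Rightarrow> 'a::comm_ring_1"
  assumes hi: "\<And>m n. n > m \<Longrightarrow> B m n = 0" and u: "\<And>m. B m m dvd 1"
  shows "(\<forall>n. (\<Sum>m<N. c m * B m n) = 0) \<Longrightarrow> \<forall>m<N. c m = 0"
proof (induction N)
  case 0 then show ?case by simp
next
  case (Suc N)
  have "(\<Sum>m<Suc N. c m * B m N) = (\<Sum>m<N. c m * B m N) + c N * B N N" by simp
  moreover have "(\<Sum>m<N. c m * B m N) = 0" by (rule sum.neutral) (auto simp: hi)
  ultimately have "c N * B N N = 0" using Suc.prems[rule_format, of N] by simp
  moreover obtain v where "1 = B N N * v" using u[of N] dvdE by blast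
  ultimately have cN: "c N = 0" by (metis mult.assoc mult_1_right mult_zero_left)
  have "\<forall>n. (\<Sum>m<N. c m * B m n) = 0" using Suc.prems cN by simp
  then show ?case using Suc.IH cN less_Suc_eq by auto
qed

lemma tri_exists:
  fixes B :: "nat \<Rightarrow> nat \<Rightarrow> 'a::comm_ring_1"
  assumes hi: "\<And>m n. n > m \<Longrightarrow> B m n = 0" and u: "\<And>m. B m m dvd 1"
  shows "\<forall>n\<ge>N. h n = 0 \<Longrightarrow> \<exists>c. \<forall>n. h n = (\<Sum>m<N. c m * B m n)"
proof (induction N arbitrary: h)
  case 0 then show ?case by simp
next
  case (Suc N)
  obtain v where v: "1 = B N N * v" using u[of N] dvdE by blast
  define h' where "h' n = h n - h N * v * B N n" for n
  have "\<forall>n\<ge>N. h' n = 0"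
  proof (intro allI impI)
    fix n assume n: "N \<le> n"
    show "h' n = 0"
    proof (cases "n = N")
      case True then have "h N * v * B N N = h N" using v by (metis mult.assoc mult.commute mult_1_right)
      then show ?thesis unfolding h'_def using True by simp
    next
      case False then show ?thesis unfolding h'_def using n Suc.prems hi by simp
    qed
  qed
  then obtain c where c: "\<forall>n. h' n = (\<Sum>m<N. c m * B m n)" using Suc.IH by blast
  define c' where "c' = c(N := h N * v)"
  have "\<forall>n. h n = (\<Sum>m<Suc N. c' m * B m n)"
  proof
    fix n
    have "(\<Sum>m<N. c' m * B m n) = (\<Sum>m<N. c m * B m n)" unfolding c'_def by (rule sum.cong) auto
    then show "h n = (\<Sum>m<Suc N. c' m * B m n)" using c[rule_format, of n] unfolding h'_def c'_def
      by (simp add: algebra_simps)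
  qed
  then show ?case by blast
qed


lemma repr:
  fixes ps :: "nat \<Rightarrow> 'a::comm_ring_1 poly"
  assumes r: "r > 0" and d: "\<forall>i<r. degree (ps i) < K"
  shows "(\<Sum>i<r. zact s f (ps i) (tmon i) n) = (\<Sum>m<r*K. coeff (ps (m mod r)) (m div r) * Bf s f r m n)"
proof -
  define F where "F i k = coeff (ps i) k * tmult s (tmon i) (tpow s f k) n" for i k
  have step1: "zact s f (ps i) (tmon i) n = (\<Sum>k<K. F i k)" if i: "i < r" for i
    unfolding zact_def F_def
  proof (rule sum.mono_neutral_left)
    show "finite {..<K}" by simp
    show "{..degree (ps i)} \<subseteq> {..<K}" using d i by auto
    show "\<forall>k\<in>{..<K} - {..degree (ps i)}. coeff (ps i) k * tmult s (tmon i) (tpow s f k) n = 0"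
      by (auto simp: coeff_eq_0)
  qed
  have "(\<Sum>i<r. zact s f (ps i) (tmon i) n) = (\<Sum>i<r. \<Sum>k<K. F i k)"
    using step1 by simp
  also have "\<dots> = sum (case_prod F) ({..<r} \<times> {..<K})"
    by (rule sum.cartesian_product)
  also have "\<dots> = (\<Sum>m<r*K. F (m mod r) (m div r))"
  proof (rule sum.reindex_bij_witness[where j="\<lambda>(a,b). a + r*b" and i="\<lambda>m. (m mod r, m div r)"], goal_cases)
    case (1 a)
    then show ?case using r by auto
  next
    case (2 a)
    then obtain x y where a: "a = (x,y)" "x < r" "y < K" by auto
    have "x + r*y < r + r*y" using a by simp
    also have "\<dots> = r * Suc y" by simp
    also have "\<dots> \<le> r*K" using a by (intro mult_le_mono2) simp
    finally show ?case using a by simp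
  next
    case (3 m)
    then show ?case by simp
  next
    case (4 m)
    have "m div r < K" using 4 r by (simp add: div_less_iff_less_mult mult.commute)
    then show ?case using r by simp
  next
    case (5 a)
    then show ?case by auto
  qed
  finally show ?thesis unfolding F_def Bf_def by simp
qed

theorem lemma4p2:
  fixes tau :: "'a::comm_ring_1 \<Rightarrow> 'a" and theta :: 'a and A :: "nat \<Rightarrow> 'a" and r :: nat
  assumes "ring_automorphism tau" and "r \<ge> 1" and "A r dvd 1"
  shows "\<forall>h. twisted_poly h \<longrightarrow>
           (\<exists>!ps :: nat \<Rightarrow> 'a poly. (\<forall>i\<ge>r. ps i = 0) \<and>
              h = (\<lambda>n. \<Sum>i<r. zact (inv tau) (dual_phi (inv tau) theta A r) (ps i) (tmon i) n))"
proof (intro allI impI)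
  fix h :: "nat \<Rightarrow> 'a" assume tp: "twisted_poly h"
  define s where "s = inv tau"
  define f where "f = dual_phi s theta A r"
  have bij: "bij tau" and t1: "tau 1 = 1" and tadd: "\<And>x y. tau (x + y) = tau x + tau y"
    and tmul: "\<And>x y. tau (x * y) = tau x * tau y"
    using assms(1) unfolding ring_automorphism_def by auto
  have inj: "inj tau" using bij bij_def by auto
  have t0: "tau 0 = 0" using tadd[of 0 0] by simp
  have s0: "s 0 = 0" unfolding s_def using t0 inj by (metis inv_f_f)
  have s1: "s 1 = 1" unfolding s_def using t1 inj by (metis inv_f_f)
  have sm: "\<forall>x y. s (x*y) = s x * s y"
  proof (intro allI)
    fix x y
    have "tau (s x * s y) = x * y" unfolding s_def using tmul bij by (simp add: bij_inv_eq_iff bij_betw_inv_into_right)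
    then show "s (x*y) = s x * s y" unfolding s_def using inj by (metis inv_f_f)
  qed
  have r0: "r > 0" using assms(2) by simp
  have fh: "\<forall>n>r. f n = 0" unfolding f_def dual_phi_def by simp
  have fu: "f r dvd 1" unfolding f_def dual_phi_def using r0 funpow_unit[where s=s, OF sm s1 assms(3)] by simp
  define B where "B = Bf s f r"
  have hi: "\<And>m n. n > m \<Longrightarrow> B m n = 0" and u: "\<And>m. B m m dvd 1"
    unfolding B_def using Bf_props[where s=s, OF s0 sm s1 fh fu] by blast+
  have "\<exists>!ps :: nat \<Rightarrow> 'a poly. (\<forall>i\<ge>r. ps i = 0) \<and>
              h = (\<lambda>n. \<Sum>i<r. zact s f (ps i) (tmon i) n)"
  proof (rule ex_ex1I)
    obtain N where N: "{i. h i \<noteq> 0} \<subseteq> {..<N}"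
      using tp finite_nat_bounded unfolding twisted_poly_def by blast
    define K where "K = Suc N"
    have "1 * K \<le> r * K" using r0 by (intro mult_le_mono1) simp
    then have NK: "N \<le> r * K" unfolding K_def by simp
    have "\<forall>n\<ge>r*K. h n = 0" using N NK by fastforce
    then obtain c where c: "\<forall>n. h n = (\<Sum>m<r*K. c m * B m n)"
      using tri_exists[of B, OF hi u] by blast
    define ps where "ps i = (if i < r then (\<Sum>k<K. monom (c (i + r*k)) k) else 0)" for i
    have cps: "coeff (ps i) j = (if j < K then c (i + r*j) else 0)" if "i < r" for i j
      unfolding ps_def using that by (simp add: coeff_sum coeff_monom)
    have dps: "degree (ps i) < K" if "i < r" for i
    proof -
      have "degree (ps i) \<le> N" by (rule degree_le) (auto simp: cps that K_def)
      then show ?thesis unfolding K_def by simp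
    qed
    show "\<exists>ps :: nat \<Rightarrow> 'a poly. (\<forall>i\<ge>r. ps i = 0) \<and> h = (\<lambda>n. \<Sum>i<r. zact s f (ps i) (tmon i) n)"
    proof (intro exI conjI)
      show "\<forall>i\<ge>r. ps i = 0" unfolding ps_def by simp
      show "h = (\<lambda>n. \<Sum>i<r. zact s f (ps i) (tmon i) n)"
      proof
        fix n
        have "(\<Sum>i<r. zact s f (ps i) (tmon i) n) = (\<Sum>m<r*K. coeff (ps (m mod r)) (m div r) * Bf s f r m n)"
          using repr[OF r0] dps by blast
        also have "\<dots> = (\<Sum>m<r*K. c m * B m n)"
        proof (rule sum.cong)
          fix m assume m: "m \<in> {..<r*K}"
          have "m div r < K" using m r0 by (simp add: div_less_iff_less_mult mult.commute)
          then show "coeff (ps (m mod r)) (m div r) * Bf s f r m n = c m * B m n"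
            using cps r0 B_def by simp
        qed simp
        finally show "h n = (\<Sum>i<r. zact s f (ps i) (tmon i) n)" using c by simp
      qed
    qed
  next
    fix ps ps' :: "nat \<Rightarrow> 'a poly"
    assume P1: "(\<forall>i\<ge>r. ps i = 0) \<and> h = (\<lambda>n. \<Sum>i<r. zact s f (ps i) (tmon i) n)"
      and P2: "(\<forall>i\<ge>r. ps' i = 0) \<and> h = (\<lambda>n. \<Sum>i<r. zact s f (ps' i) (tmon i) n)"
    define K where "K = Suc (\<Sum>i<r. degree (ps i) + degree (ps' i))"
    have le: "degree (ps i) + degree (ps' i) \<le> (\<Sum>i<r. degree (ps i) + degree (ps' i))" if "i < r" for i
      using that by (intro member_le_sum) auto
    have d1: "\<forall>i<r. degree (ps i) < K" and d2: "\<forall>i<r. degree (ps' i) < K"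
      unfolding K_def using le by (auto simp: less_Suc_eq_le intro: le_trans[OF le_add1] le_trans[OF le_add2])
    define a where "a m = coeff (ps (m mod r)) (m div r)" for m
    define b where "b m = coeff (ps' (m mod r)) (m div r)" for m
    have eq: "(\<Sum>m<r*K. a m * B m n) = (\<Sum>m<r*K. b m * B m n)" for n
    proof -
      have "(\<Sum>i<r. zact s f (ps i) (tmon i) n) = (\<Sum>i<r. zact s f (ps' i) (tmon i) n)"
        using P1 P2 by metis
      then show ?thesis unfolding a_def b_def B_def using repr[OF r0 d1] repr[OF r0 d2] by simp
    qed
    have z: "\<forall>n. (\<Sum>m<r*K. (a m - b m) * B m n) = 0"
      using eq by (simp add: left_diff_distrib sum_subtractf)
    have ab: "\<forall>m<r*K. a m - b m = 0" using tri_unique[where B=B and N="r*K" and c="\<lambda>m. a m - b m", OF hi u] z by blast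
    show "ps = ps'"
    proof
      fix i
      show "ps i = ps' i"
      proof (cases "i < r")
        case False then show ?thesis using P1 P2 by simp
      next
        case True
        show ?thesis
        proof (rule poly_eqI)
          fix j
          show "coeff (ps i) j = coeff (ps' i) j"
          proof (cases "j < K")
            case True
            have "i + r*j < r + r*j" using \<open>i < r\<close> by simp
            also have "\<dots> = r * Suc j" by simp
            also have "\<dots> \<le> r*K" using True by (intro mult_le_mono2) simp
            finally have "a (i + r*j) - b (i + r*j) = 0" using ab by blast
            then show ?thesis unfolding a_def b_def using \<open>i < r\<close> by simp
          next
            case False
            then have "degree (ps i) < j" "degree (ps' i) < j" using d1 d2 \<open>i < r\<close> by auto
            then show ?thesis by (simp add: coeff_eq_0)
          qed
        qed
      qed
    qed
  qed
  then show "\<exists>!ps :: nat \<Rightarrow> 'a poly. (\<forall>i\<ge>r. ps i = 0) \<and>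
              h = (\<lambda>n. \<Sum>i<r. zact (inv tau) (dual_phi (inv tau) theta A r) (ps i) (tmon i) n)"
    unfolding f_def s_def .
qed

end
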